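(* The kernel of the augmentation homomorphism $\varepsilon:\Lambda(\mathbb{Q}\mathrm{Par})=\Lambda_0(\mathbb{Q}\mathrm{Par})\to L_0$ is an abelian Lie algebra.
   Context: The nonsymmetric operad of partitions $\mathrm{Par}$: $\mathrm{Par}((0))=\emptyset$, $\mathrm{Par}((1))=\{1\}$, and for $m\ge2$, $\mathrm{Par}((m))$ is the set of monomials $\prod_{i=1}^Nx_i^{a_i}$ with $N\ge2$, all $a_i\ge1$, $\sum a_i=m$. Partial composition: if $a_1+\dots+a_{l-1}+1\le s\le a_1+\dots+a_l$, then $\left(\prod_{i=1}^Nx_i^{a_i}\right)\circ_s\left(\prod_{k=1}^{N_s}x_k^{b_k}\right)=x_l^{a_l-1+\sum_kb_k}\prod_{i\ne l}x_i^{a_i}$; $1$ is a two-sided unit. $\Lambda(\mathbb{Q}\mathrm{Par})=\Lambda_0(\mathbb{Q}\mathrm{Par})=\bigoplus_{m\ge1}\mathbb{Q}\mathrm{Par}((m))$ with Lie bracket $[c,d]=\sum_{t=1}^{j}d\circ_tc-\sum_{s=1}^{k}c\circ_sd$ for $c\in\mathrm{Par}((k))$, $d\in\mathrm{Par}((j))$. $L_0=x\mathbb{Q}[x]\frac{d}{dx}$ with the usual bracket of vector fields; the augmentation $\varepsilon$ is the Lie algebra homomorphism sending every element of $\mathrm{Par}((m))$ to $x^m\frac{d}{dx}$ (so $\sum a_cc\mapsto(\sum a_c)x^m\frac{d}{dx}$). *)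

theory Defs
  imports "HOL-Computational_Algebra.Polynomial"
begin

text \<open>An element of Par((m)) is encoded as the exponent list [a_1,...,a_N] of the
monomial x_1^a_1 ... x_N^a_N (N >= 2, all a_i >= 1, arity m = a_1+...+a_N);
the unit 1 in Par((1)) is encoded as the list [1].\<close>

definition is_par :: "nat list \<Rightarrow> bool" where
  "is_par c \<longleftrightarrow> c = [1] \<or> (length c \<ge> 2 \<and> (\<forall>a\<in>set c. a \<ge> 1))"

definition arity :: "nat list \<Rightarrow> nat" where
  "arity c = sum_list c"

definition Par :: "nat \<Rightarrow> nat list set" where
  "Par m = {c. is_par c \<and> arity c = m}"

text \<open>Partial composition c o_s d (s in 1..arity c). Index l is 0-based here:
the least l with s <= a_1+...+a_(l+1).\<close>
definition pcomp :: "nat list \<Rightarrow> nat \<Rightarrow> nat list \<Rightarrow> nat list" where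
  "pcomp c s d =
     (if c = [1] then d
      else let l = (LEAST l. s \<le> sum_list (take (Suc l) c))
           in c[l := c ! l - 1 + sum_list d])"

definition QPar :: "(nat list \<Rightarrow> rat) set" where
  "QPar = {f. finite {c. f c \<noteq> 0} \<and> (\<forall>c. f c \<noteq> 0 \<longrightarrow> is_par c)}"

definition supp :: "(nat list \<Rightarrow> rat) \<Rightarrow> nat list set" where
  "supp f = {c. f c \<noteq> 0}"

text \<open>Bilinear extension of [c,d] = sum_t d o_t c - sum_s c o_s d.\<close>
definition bracket :: "(nat list \<Rightarrow> rat) \<Rightarrow> (nat list \<Rightarrow> rat) \<Rightarrow> (nat list \<Rightarrow> rat)" where
  "bracket f g = (\<lambda>p. \<Sum>c\<in>supp f. \<Sum>d\<in>supp g. f c * g d *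
      (of_nat (card {t\<in>{1..arity d}. pcomp d t c = p})
       - of_nat (card {s\<in>{1..arity c}. pcomp c s d = p})))"

text \<open>L_0 = x Q[x] d/dx; the vector field P(x) d/dx is represented by the polynomial P.
The augmentation sends c in Par((m)) to x^m d/dx.\<close>
definition augmentation :: "(nat list \<Rightarrow> rat) \<Rightarrow> rat poly" where
  "augmentation f = (\<Sum>c\<in>supp f. monom (f c) (arity c))"

end

theory Submission
  imports Defs
begin

lemma coeff_aug:
  assumes "f \<in> QPar"
  shows "coeff (augmentation f) m = (\<Sum>c\<in>{c\<in>supp f. arity c = m}. f c)"
proof -
  have fin: "finite (supp f)" using assms by (simp add: QPar_def supp_def)
  have "coeff (augmentation f) m = (\<Sum>c\<in>supp f. if arity c = m then f c else 0)"
    unfolding augmentation_def by (simp add: coeff_sum coeff_monom eq_commute)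
  also have "\<dots> = (\<Sum>c\<in>{c\<in>supp f. arity c = m}. f c)"
    using fin by (simp add: sum.inter_filter)
  finally show ?thesis .
qed

lemma kill:
  assumes "f \<in> QPar" "augmentation f = 0"
  shows "(\<Sum>c\<in>supp f. f c * h (arity c)) = 0"
proof -
  have fin: "finite (supp f)" using assms by (simp add: QPar_def supp_def)
  have "(\<Sum>c\<in>supp f. f c * h (arity c))
      = (\<Sum>m\<in>arity ` supp f. \<Sum>c\<in>{c\<in>supp f. arity c = m}. f c * h (arity c))"
    using fin by (intro sum.group[symmetric]) auto
  also have "\<dots> = (\<Sum>m\<in>arity ` supp f. h m * (\<Sum>c\<in>{c\<in>supp f. arity c = m}. f c))"
    by (intro sum.cong refl) (simp add: sum_distrib_left mult.commute)
  also have "\<dots> = 0"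
    using coeff_aug[OF assms(1)] assms(2) by simp
  finally show ?thesis .
qed

lemma len_le_sum: "\<forall>a\<in>set c. (a::nat) \<ge> 1 \<Longrightarrow> length c \<le> sum_list c"
  by (induction c) auto

lemma not_unit:
  assumes "f \<in> QPar" "augmentation f = 0" "c \<in> supp f"
  shows "c \<noteq> [1]"
proof
  assume c: "c = [1]"
  have "{c\<in>supp f. arity c = 1} = {[1]}"
  proof (intro equalityI subsetI)
    fix x assume x: "x \<in> {c\<in>supp f. arity c = 1}"
    then have "is_par x" using assms(1) by (auto simp: QPar_def supp_def)
    with x show "x \<in> {[1]}"
      using len_le_sum[of x] by (auto simp: is_par_def arity_def)
  qed (use assms c in \<open>auto simp: arity_def\<close>)
  then have "f [1] = 0" using coeff_aug[OF assms(1), of 1] assms(2) by simp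
  with assms(3) c show False by (simp add: supp_def)
qed

definition pc :: "nat list \<Rightarrow> nat \<Rightarrow> nat \<Rightarrow> nat list" where
  "pc c s n = (let l = (LEAST l. s \<le> sum_list (take (Suc l) c)) in c[l := c ! l - 1 + n])"

lemma pcomp_pc: "c \<noteq> [1] \<Longrightarrow> pcomp c s d = pc c s (arity d)"
  by (simp add: pcomp_def pc_def arity_def)

theorem corollary4p2:
  assumes "f \<in> QPar" and "g \<in> QPar"
    and "augmentation f = 0" and "augmentation g = 0"
  shows "bracket f g = (\<lambda>_. 0)"
proof
  fix p
  have ff: "finite (supp f)" "finite (supp g)" using assms by (simp_all add: QPar_def supp_def)
  define A where "A d n = (of_nat :: nat \<Rightarrow> rat) (card {t\<in>{1..arity d}. pc d t n = p})" for d n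
  define B where "B c n = (of_nat :: nat \<Rightarrow> rat) (card {s\<in>{1..arity c}. pc c s n = p})" for c n
  have "bracket f g p = (\<Sum>c\<in>supp f. \<Sum>d\<in>supp g. f c * g d * (A d (arity c) - B c (arity d)))"
    unfolding bracket_def A_def B_def
    using not_unit[OF assms(1,3)] not_unit[OF assms(2,4)]
    by (intro sum.cong refl) (simp add: pcomp_pc)
  also have "\<dots> = (\<Sum>c\<in>supp f. \<Sum>d\<in>supp g. f c * g d * A d (arity c))
              - (\<Sum>c\<in>supp f. \<Sum>d\<in>supp g. f c * g d * B c (arity d))"
    by (simp add: right_diff_distrib sum_subtractf)
  also have "(\<Sum>c\<in>supp f. \<Sum>d\<in>supp g. f c * g d * A d (arity c))
           = (\<Sum>d\<in>supp g. g d * (\<Sum>c\<in>supp f. f c * A d (arity c)))"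
    by (subst sum.swap) (simp add: sum_distrib_left mult_ac)
  also have "\<dots> = 0" using kill[OF assms(1,3)] by simp
  also have "(\<Sum>c\<in>supp f. \<Sum>d\<in>supp g. f c * g d * B c (arity d))
           = (\<Sum>c\<in>supp f. f c * (\<Sum>d\<in>supp g. g d * B c (arity d)))"
    by (simp add: sum_distrib_left mult_ac)
  also have "\<dots> = 0" using kill[OF assms(2,4)] by simp
  finally show "bracket f g p = 0" by simp
qed

end
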